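(* For $n\ge1$, $$\left|\Pi_n\wr C_2(1^11^1,1^12^2,1^22^1)\right|=\begin{cases}4&\text{if } n=2,\\ 2&\text{otherwise}.\end{cases}$$
   Context: For $n\ge0$ let $[n]=\{1,\dots,n\}$. A $2$-colored set partition of $[n]$ is a set partition of $[n]$ together with an assignment of a color from $\{1,2\}$ to each element; $\Pi_n\wr C_2$ is the set of these. For a set $S$ of patterns, $\Pi_n\wr C_2(S)$ is the set of such colored partitions avoiding every pattern in $S$ in the pattern sense. For the patterns used here: $\sigma$ contains $1^11^1$ iff two elements in the same block have the same color; $1^12^2$ iff there are $i<j$ in different blocks with $i$ colored $1$ and $j$ colored $2$; $1^22^1$ iff there are $i<j$ in different blocks with $i$ colored $2$ and $j$ colored $1$. *)

theory Defs
  imports Main "HOL-Library.Disjoint_Sets" "HOL-Library.FuncSet"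
begin

text \<open>A 2-colored set partition of [n]: a set partition P of {1..n} together with a
colouring c : {1..n} -> {1,2} (extensional, i.e. c is undefined outside {1..n}).\<close>
definition colored_partitions :: "nat \<Rightarrow> (nat set set \<times> (nat \<Rightarrow> nat)) set" where
  "colored_partitions n =
     {(P, c). partition_on {1..n} P \<and> c \<in> {1..n} \<rightarrow>\<^sub>E {1, 2}}"

definition same_block :: "nat set set \<Rightarrow> nat \<Rightarrow> nat \<Rightarrow> bool" where
  "same_block P i j \<longleftrightarrow> (\<exists>B\<in>P. i \<in> B \<and> j \<in> B)"

definition contains_1111 :: "nat \<Rightarrow> nat set set \<times> (nat \<Rightarrow> nat) \<Rightarrow> bool" where
  "contains_1111 n \<sigma> \<longleftrightarrow> (\<exists>i\<in>{1..n}. \<exists>j\<in>{1..n}. i < j \<and>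
      same_block (fst \<sigma>) i j \<and> snd \<sigma> i = snd \<sigma> j)"

definition contains_1122 :: "nat \<Rightarrow> nat set set \<times> (nat \<Rightarrow> nat) \<Rightarrow> bool" where
  "contains_1122 n \<sigma> \<longleftrightarrow> (\<exists>i\<in>{1..n}. \<exists>j\<in>{1..n}. i < j \<and>
      \<not> same_block (fst \<sigma>) i j \<and> snd \<sigma> i = 1 \<and> snd \<sigma> j = 2)"

definition contains_1221 :: "nat \<Rightarrow> nat set set \<times> (nat \<Rightarrow> nat) \<Rightarrow> bool" where
  "contains_1221 n \<sigma> \<longleftrightarrow> (\<exists>i\<in>{1..n}. \<exists>j\<in>{1..n}. i < j \<and>
      \<not> same_block (fst \<sigma>) i j \<and> snd \<sigma> i = 2 \<and> snd \<sigma> j = 1)"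

definition avoiders :: "nat \<Rightarrow> (nat set set \<times> (nat \<Rightarrow> nat)) set" where
  "avoiders n = {\<sigma> \<in> colored_partitions n.
      \<not> contains_1111 n \<sigma> \<and> \<not> contains_1122 n \<sigma> \<and> \<not> contains_1221 n \<sigma>}"

end

theory Submission
  imports Defs
begin

lemma sb_trans:
  assumes "partition_on A P" "same_block P i j" "same_block P j k"
  shows "same_block P i k"
proof -
  obtain B where B: "B \<in> P" "i \<in> B" "j \<in> B" using assms(2) unfolding same_block_def by blast
  obtain B' where B': "B' \<in> P" "j \<in> B'" "k \<in> B'" using assms(3) unfolding same_block_def by blast
  have "B = B'" using assms(1) B B' unfolding partition_on_def disjoint_def by blast
  thus ?thesis using B B' unfolding same_block_def by blast
qed

lemma sb_sym: "same_block P i j \<Longrightarrow> same_block P j i"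
  unfolding same_block_def by blast

lemma sb_refl: "partition_on A P \<Longrightarrow> i \<in> A \<Longrightarrow> same_block P i i"
  unfolding same_block_def partition_on_def by blast

lemma P_repr:
  assumes "partition_on A P"
  shows "P = (\<lambda>x. {y\<in>A. same_block P x y}) ` A"
proof (intro set_eqI iffI)
  fix B assume B: "B \<in> P"
  then obtain x where x: "x \<in> B" using assms partition_onD3 by fastforce
  have sub: "B \<subseteq> A" using assms B partition_onD1 by blast
  have "B = {y\<in>A. same_block P x y}"
  proof (intro set_eqI iffI)
    fix y assume "y \<in> B" thus "y \<in> {y\<in>A. same_block P x y}" using sub x B unfolding same_block_def by blast
  next
    fix y assume "y \<in> {y\<in>A. same_block P x y}"
    then obtain B' where "B' \<in> P" "x \<in> B'" "y \<in> B'" unfolding same_block_def by blast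
    moreover have "B = B'" using assms B x calculation unfolding partition_on_def disjoint_def by blast
    ultimately show "y \<in> B" by blast
  qed
  thus "B \<in> (\<lambda>x. {y\<in>A. same_block P x y}) ` A" using x sub by blast
next
  fix B assume "B \<in> (\<lambda>x. {y\<in>A. same_block P x y}) ` A"
  then obtain x where x: "x \<in> A" "B = {y\<in>A. same_block P x y}" by blast
  obtain B' where B': "B' \<in> P" "x \<in> B'" using assms x partition_onD1 by blast
  have "B' = B"
  proof (intro set_eqI iffI)
    fix y assume "y \<in> B'" thus "y \<in> B" using x B' assms partition_onD1 unfolding same_block_def by blast
  next
    fix y assume "y \<in> B"
    then obtain B'' where "B'' \<in> P" "x \<in> B''" "y \<in> B''" using x unfolding same_block_def by blast
    moreover have "B' = B''" using assms B' calculation unfolding partition_on_def disjoint_def by blast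
    ultimately show "y \<in> B'" by blast
  qed
  thus "B \<in> P" using B' by blast
qed

lemma char:
  "(P, c) \<in> avoiders n \<longleftrightarrow> partition_on {1..n} P \<and> c \<in> {1..n} \<rightarrow>\<^sub>E {1, 2} \<and>
     (\<forall>i\<in>{1..n}. \<forall>j\<in>{1..n}. i \<noteq> j \<longrightarrow> (same_block P i j \<longleftrightarrow> c i \<noteq> c j))"
proof
  assume a: "(P, c) \<in> avoiders n"
  hence c: "c \<in> {1..n} \<rightarrow>\<^sub>E {1, 2}" and p: "partition_on {1..n} P"
    unfolding avoiders_def colored_partitions_def by auto
  have h: "same_block P i j \<longleftrightarrow> c i \<noteq> c j" if "i \<in> {1..n}" "j \<in> {1..n}" "i < j" for i j
  proof -
    have ci: "c i \<in> {1,2}" "c j \<in> {1,2}" using c that by auto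
    have n1: "\<not> (same_block P i j \<and> c i = c j)"
      using a that unfolding avoiders_def contains_1111_def by auto
    have n2: "\<not> (\<not> same_block P i j \<and> c i = 1 \<and> c j = 2)"
      using a that unfolding avoiders_def contains_1122_def by auto
    have n3: "\<not> (\<not> same_block P i j \<and> c i = 2 \<and> c j = 1)"
      using a that unfolding avoiders_def contains_1221_def by auto
    show ?thesis using n1 n2 n3 ci by auto
  qed
  show "partition_on {1..n} P \<and> c \<in> {1..n} \<rightarrow>\<^sub>E {1, 2} \<and>
     (\<forall>i\<in>{1..n}. \<forall>j\<in>{1..n}. i \<noteq> j \<longrightarrow> (same_block P i j \<longleftrightarrow> c i \<noteq> c j))"
  proof (intro conjI p c ballI impI)
    fix i j assume ij: "i \<in> {1..n}" "j \<in> {1..n}" "i \<noteq> j"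
    show "same_block P i j \<longleftrightarrow> c i \<noteq> c j"
    proof (cases "i < j")
      case True thus ?thesis using h ij by blast
    next
      case False
      hence "j < i" using ij by simp
      hence "same_block P j i \<longleftrightarrow> c j \<noteq> c i" using h[of j i] ij by blast
      moreover have "same_block P j i \<longleftrightarrow> same_block P i j" using sb_sym by metis
      ultimately show ?thesis by auto
    qed
  qed
next
  assume a: "partition_on {1..n} P \<and> c \<in> {1..n} \<rightarrow>\<^sub>E {1, 2} \<and>
     (\<forall>i\<in>{1..n}. \<forall>j\<in>{1..n}. i \<noteq> j \<longrightarrow> (same_block P i j \<longleftrightarrow> c i \<noteq> c j))"
  hence c: "\<And>i. i \<in> {1..n} \<Longrightarrow> c i \<in> {1,2}" by auto
  have q: "\<And>i j. i \<in> {1..n} \<Longrightarrow> j \<in> {1..n} \<Longrightarrow> i < j \<Longrightarrow> (same_block P i j \<longleftrightarrow> c i \<noteq> c j)"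
    using a by (metis less_irrefl)
  have "\<not> contains_1111 n (P, c)" unfolding contains_1111_def using q by auto
  moreover have "\<not> contains_1122 n (P, c)" unfolding contains_1122_def using q by fastforce
  moreover have "\<not> contains_1221 n (P, c)" unfolding contains_1221_def using q by fastforce
  ultimately show "(P, c) \<in> avoiders n"
    unfolding avoiders_def colored_partitions_def using a by simp
qed

definition S :: "nat \<Rightarrow> nat set set" where "S n = (\<lambda>x. {x}) ` {1..n}"
definition cc :: "nat \<Rightarrow> nat \<Rightarrow> nat \<Rightarrow> nat" where "cc n a = (\<lambda>i\<in>{1..n}. a)"

lemma sb_S: "i \<in> {1..n} \<Longrightarrow> same_block (S n) i j \<longleftrightarrow> i = j"
  unfolding same_block_def S_def by auto

lemma S_in: "a \<in> {1,2} \<Longrightarrow> (S n, cc n a) \<in> avoiders n"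
  unfolding char using sb_S partition_on_singletons[of "{1..n}"]
  by (auto simp: S_def cc_def)

lemma S_char:
  assumes "partition_on {1..n} P" "\<And>i j. i \<in> {1..n} \<Longrightarrow> j \<in> {1..n} \<Longrightarrow> same_block P i j \<longleftrightarrow> i = j"
  shows "P = S n"
proof -
  have "P = (\<lambda>x. {y\<in>{1..n}. same_block P x y}) ` {1..n}" using P_repr assms(1) .
  also have "\<dots> = S n" unfolding S_def
    by (intro image_cong refl) (use assms(2) in auto)
  finally show ?thesis .
qed

lemma not2:
  assumes "n \<noteq> 2" "(P, c) \<in> avoiders n" "i \<in> {1..n}" "j \<in> {1..n}" "i \<noteq> j"
  shows "\<not> same_block P i j"
proof
  assume sij: "same_block P i j"
  have ch: "partition_on {1..n} P" "c \<in> {1..n} \<rightarrow>\<^sub>E {1, 2}"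
     "\<And>i j. i\<in>{1..n} \<Longrightarrow> j\<in>{1..n} \<Longrightarrow> i \<noteq> j \<Longrightarrow> (same_block P i j \<longleftrightarrow> c i \<noteq> c j)"
    using assms(2) unfolding char by auto
  have "n \<ge> 3" using assms by auto
  then obtain k where k: "k \<in> {1..n}" "k \<noteq> i" "k \<noteq> j"
  proof -
    have "\<exists>k\<in>{1,2,3::nat}. k \<noteq> i \<and> k \<noteq> j" by auto
    then show ?thesis using that[of 1] that[of 2] that[of 3] \<open>n \<ge> 3\<close> by auto
  qed
  have col: "c i \<in> {1,2}" "c j \<in> {1,2}" "c k \<in> {1,2}" using ch(2) k assms by auto
  have cij: "c i \<noteq> c j" using ch(3) sij assms by blast
  show False
  proof (cases "same_block P i k")
    case True
    hence "same_block P j k" using sb_trans[OF ch(1) sb_sym[OF sij]] by blast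
    hence "c j \<noteq> c k" "c i \<noteq> c k" using True ch(3) k assms by blast+
    thus False using col cij by auto
  next
    case False
    have "\<not> same_block P j k" using False sb_trans[OF ch(1) sij] by blast
    hence "c j = c k" "c i = c k" using False ch(3) k assms by blast+
    thus False using cij by auto
  qed
qed

lemma avoid_ne2: "n \<noteq> 2 \<Longrightarrow> avoiders n = {(S n, cc n 1), (S n, cc n 2)}"
proof (intro set_eqI iffI)
  fix x assume n: "n \<noteq> 2" and x: "x \<in> avoiders n"
  obtain P c where Pc: "x = (P, c)" by fastforce
  have ch: "partition_on {1..n} P" "c \<in> {1..n} \<rightarrow>\<^sub>E {1, 2}"
     "\<And>i j. i\<in>{1..n} \<Longrightarrow> j\<in>{1..n} \<Longrightarrow> i \<noteq> j \<Longrightarrow> (same_block P i j \<longleftrightarrow> c i \<noteq> c j)"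
    using x unfolding Pc char by auto
  have xa: "(P, c) \<in> avoiders n" using x Pc by simp
  have ns: "\<And>i j. i\<in>{1..n} \<Longrightarrow> j\<in>{1..n} \<Longrightarrow> i \<noteq> j \<Longrightarrow> \<not> same_block P i j"
    using not2[OF n xa] by blast
  have ns2: "\<And>i j. i\<in>{1..n} \<Longrightarrow> j\<in>{1..n} \<Longrightarrow> same_block P i j \<longleftrightarrow> i = j"
  proof -
    fix i j assume ij: "i\<in>{1..n}" "j\<in>{1..n}"
    show "same_block P i j \<longleftrightarrow> i = j"
    proof (cases "i = j")
      case True thus ?thesis using sb_refl[OF ch(1) ij(1)] by simp
    next
      case False thus ?thesis using ns[OF ij False] by simp
    qed
  qed
  have P: "P = S n" by (rule S_char[OF ch(1) ns2])
  show "x \<in> {(S n, cc n 1), (S n, cc n 2)}"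
  proof (cases "n = 0")
    case True
    hence "c = cc n 1" using ch(2) unfolding cc_def by (auto simp: fun_eq_iff intro: PiE_arb)
    thus ?thesis using P Pc by simp
  next
    case False
    hence one: "1 \<in> {1..n}" by simp
    have const: "c i = c 1" if i: "i \<in> {1..n}" for i
    proof (cases "i = 1")
      case False
      have "\<not> same_block P i 1" using ns[OF i one False] .
      thus ?thesis using ch(3)[OF i one False] by simp
    next
      case True thus ?thesis by (rule arg_cong)
    qed
    define v where "v = c 1"
    have "c = cc n v" unfolding cc_def
    proof
      fix i show "c i = (\<lambda>i\<in>{1..n}. v) i"
      proof (cases "i \<in> {1..n}")
        case True
        have "c i = v" unfolding v_def by (rule const[OF True])
        thus ?thesis using True by simp
      next
        case False thus ?thesis using PiE_arb[OF ch(2) False] by auto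
      qed
    qed
    moreover have "v \<in> {1,2}" using ch(2) one v_def by auto
    ultimately show ?thesis using P Pc by auto
  qed
next
  fix x assume "x \<in> {(S n, cc n 1), (S n, cc n 2)}"
  thus "x \<in> avoiders n" using S_in by auto
qed

definition d1 :: "nat \<Rightarrow> nat" where "d1 = (\<lambda>i\<in>{1..2::nat}. i)"
definition d2 :: "nat \<Rightarrow> nat" where "d2 = (\<lambda>i\<in>{1..2::nat}. 3 - i)"

lemma twoset: "{1..2::nat} = {1,2}" by auto

lemma full_sb: "i \<in> {1..2::nat} \<Longrightarrow> j \<in> {1..2} \<Longrightarrow> same_block {{1,2}} i j"
  unfolding same_block_def by auto

lemma full_part: "partition_on {1..2::nat} {{1,2}}"
  unfolding twoset by (rule partition_on_space) simp

lemma d_in: "({{1,2}}, d1) \<in> avoiders 2" "({{1,2}}, d2) \<in> avoiders 2"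
  unfolding char using full_part full_sb by (auto simp: d1_def d2_def twoset)

lemma avoid2: "avoiders 2 = {(S 2, cc 2 1), (S 2, cc 2 2), ({{1,2}}, d1), ({{1,2}}, d2)}"
proof (intro set_eqI iffI)
  fix x assume x: "x \<in> avoiders 2"
  obtain P c where Pc: "x = (P, c)" by fastforce
  have ch: "partition_on {1..2} P" "c \<in> {1..2} \<rightarrow>\<^sub>E {1, 2}"
     "\<And>i j. i\<in>{1..2} \<Longrightarrow> j\<in>{1..2} \<Longrightarrow> i \<noteq> j \<Longrightarrow> (same_block P i j \<longleftrightarrow> c i \<noteq> c j)"
    using x unfolding Pc char by auto
  have c12: "c 1 \<in> {1,2}" "c 2 \<in> {1,2}" using ch(2) by auto
  have ext: "\<And>i. i \<notin> {1,2} \<Longrightarrow> c i = undefined" using ch(2) unfolding twoset by (auto simp: PiE_def extensional_def)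
  show "x \<in> {(S 2, cc 2 1), (S 2, cc 2 2), ({{1,2}}, d1), ({{1,2}}, d2)}"
  proof (cases "same_block P 1 2")
    case True
    have all: "\<And>i j. i \<in> {1..2} \<Longrightarrow> j \<in> {1..2} \<Longrightarrow> same_block P i j"
      unfolding twoset using True sb_sym sb_refl[OF ch(1)] twoset by auto
    have "P = (\<lambda>x. {y\<in>{1..2}. same_block P x y}) ` {1..2}" using P_repr ch(1) .
    also have "\<dots> = {{1,2}}" using all unfolding twoset by auto
    finally have P: "P = {{1,2}}" .
    have "c 1 \<noteq> c 2" using ch(3)[of 1 2] True by auto
    hence "c = d1 \<or> c = d2" using c12 ext unfolding d1_def d2_def twoset
      by (auto simp: fun_eq_iff)
    thus ?thesis using P Pc by auto
  next
    case False
    have ns: "\<And>i j. i \<in> {1..2} \<Longrightarrow> j \<in> {1..2} \<Longrightarrow> same_block P i j \<longleftrightarrow> i = j"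
      unfolding twoset using False sb_sym sb_refl[OF ch(1)] twoset by auto
    have P: "P = S 2" using S_char[OF ch(1) ns] .
    have "c 1 = c 2" using ch(3)[of 1 2] False by auto
    hence "c = cc 2 1 \<or> c = cc 2 2" using c12 ext unfolding cc_def twoset
      by (auto simp: fun_eq_iff)
    thus ?thesis using P Pc by auto
  qed
next
  fix x assume "x \<in> {(S 2, cc 2 1), (S 2, cc 2 2), ({{1,2}}, d1), ({{1,2}}, d2)}"
  thus "x \<in> avoiders 2" using S_in d_in by auto
qed

lemma card4: "a \<noteq> b \<Longrightarrow> c \<noteq> d \<Longrightarrow> X \<noteq> Y \<Longrightarrow> card {(X,a),(X,b),(Y,c),(Y,d)} = 4"
  by auto

lemma card2: "a \<noteq> b \<Longrightarrow> card {(X,a),(X,b)} = 2"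
  by auto

lemma cc_ne: "n \<ge> 1 \<Longrightarrow> cc n 1 \<noteq> cc n 2"
proof
  assume n: "n \<ge> 1" and e: "cc n 1 = cc n 2"
  have "cc n 1 1 = cc n 2 1" using e by (rule arg_cong)
  thus False unfolding cc_def using n by simp
qed

lemma d_ne: "d1 \<noteq> d2"
proof
  assume e: "d1 = d2"
  have "d1 1 = d2 1" using e by (rule arg_cong)
  thus False unfolding d1_def d2_def by simp
qed

lemma S_ne: "S 2 \<noteq> {{1,2}}"
proof
  assume e: "S 2 = {{1,2}}"
  have "{1} \<in> S 2" unfolding S_def by auto
  hence "{1::nat} = {1,2}" using e by simp
  thus False by (simp add: insert_ident)
qed

lemma card_av2: "card (avoiders 2) = 4"
proof -
  have a: "cc 2 1 \<noteq> cc 2 2" by (rule cc_ne) simp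
  show ?thesis unfolding avoid2 by (rule card4[OF a d_ne S_ne])
qed

lemma card_avn: "n \<ge> 1 \<Longrightarrow> n \<noteq> 2 \<Longrightarrow> card (avoiders n) = 2"
  unfolding avoid_ne2 by (rule card2[OF cc_ne])

theorem mainTheorem11:
  fixes n :: nat
  assumes "n \<ge> 1"
  shows "card (avoiders n) = (if n = 2 then 4 else 2)"
  using card_av2 card_avn[OF assms] by simp

end
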